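(* Let $s\in\mathbb{C}$ with $\Re(s)>1$. Let $0<q<1$ and, for each integer $r\ge1$, let $\alpha_r(s,q)\in\mathbb{C}$ be given. Suppose that there exist a bounded function $\chi:\mathbb{N}\to\mathbb{C}$ and constants $C>0$ and $\sigma>\Re(s)$ such that for all $q\in(0,1)$ and all integers $r\ge1$: (i) $\displaystyle \lim_{q\to1^-}\alpha_r(s,q)=\frac{\chi(r)}{r^{\,s}}$; (ii) $\displaystyle |\alpha_r(s,q)|\le C\,r^{-\sigma}$. Define, for each integer $n\ge1$, \[ \beta_n(s,q)=\sum_{r=1}^{n}\frac{q^r\,\alpha_r(s,q)}{(q;q)_{n-r}\,(q;q)_{n+r}}, \qquad T_n(s,q):=\frac{\sqrt{n}\,(2n)!\,(1-q)^{2n}\,\beta_n(s,q)}{4^n}. \] Then the iterated limit exists and \[ \lim_{n\to\infty}\lim_{q\to1^-}T_n(s,q)=\frac{L(s,\chi)}{\sqrt{\pi}},\qquad L(s,\chi):=\sum_{r=1}^\infty\frac{\chi(r)}{r^{\,s}}. \]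
   Context: For $0<q<1$ and an integer $m\ge0$, $(q;q)_m=\prod_{j=1}^{m}(1-q^j)$ denotes the $q$-Pochhammer symbol, with $(q;q)_0=1$. The inner limit $q\to1^-$ is taken for fixed $n$, and the outer limit $n\to\infty$ is taken afterwards. *)

theory Defs
  imports "HOL-Analysis.Analysis"
begin

definition qpoch :: "real \<Rightarrow> nat \<Rightarrow> real" where
  "qpoch q m = (\<Prod>j=1..m. 1 - q ^ j)"

text \<open>beta_n(s,q) for the given family alpha r q (s fixed).\<close>
definition beta_n :: "(nat \<Rightarrow> real \<Rightarrow> complex) \<Rightarrow> nat \<Rightarrow> real \<Rightarrow> complex" where
  "beta_n \<alpha> n q = (\<Sum>r=1..n. complex_of_real (q ^ r) * \<alpha> r q
       / complex_of_real (qpoch q (n - r) * qpoch q (n + r)))"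

definition T_n :: "(nat \<Rightarrow> real \<Rightarrow> complex) \<Rightarrow> nat \<Rightarrow> real \<Rightarrow> complex" where
  "T_n \<alpha> n q = complex_of_real (sqrt (real n) * fact (2*n) * (1 - q) ^ (2*n) / 4 ^ n)
       * beta_n \<alpha> n q"

definition L_series :: "(nat \<Rightarrow> complex) \<Rightarrow> complex \<Rightarrow> complex" where
  "L_series chi s = (\<Sum>r. chi (Suc r) / of_nat (Suc r) powr s)"

end

theory Submission imports Defs "HOL-Real_Asymp.Real_Asymp" begin

definition PP :: "real \<Rightarrow> nat \<Rightarrow> real" where
  "PP q m = (\<Prod>j=1..m. \<Sum>i<j. q^i)"

lemma qpoch_eq: "qpoch q m = (1-q)^m * PP q m"
proof -
  have "qpoch q m = (\<Prod>j=1..m. (1-q) * (\<Sum>i<j. q^i))"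
    unfolding qpoch_def by (intro prod.cong refl) (rule one_diff_power_eq)
  also have "\<dots> = (1-q)^m * PP q m"
    by (simp add: prod.distrib PP_def)
  finally show ?thesis .
qed

lemma PP_pos: "q > 0 \<Longrightarrow> PP q m > 0"
  unfolding PP_def
proof (intro prod_pos)
  fix j assume "q > 0" "j \<in> {1..m}"
  then have "0 < q^0" by simp
  also have "q^0 \<le> (\<Sum>i<j. q^i)"
    using \<open>j \<in> {1..m}\<close> \<open>q>0\<close> by (intro member_le_sum) auto
  finally show "0 < (\<Sum>i<j. q^i)" .
qed

lemma PP_lim: "((\<lambda>q. PP q m) \<longlongrightarrow> fact m) (at_left 1)"
proof -
  have "((\<lambda>q. \<Prod>j=1..m. \<Sum>i<j. (q::real)^i) \<longlongrightarrow> (\<Prod>j=1..m. \<Sum>i<j. (1::real)^i)) (at_left 1)"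
    by (intro tendsto_intros)
  moreover have "(\<Prod>j=1..m. \<Sum>i<j. (1::real)^i) = fact m"
    by (simp add: fact_prod)
  ultimately show ?thesis by (simp add: PP_def)
qed

lemma central: "(\<lambda>n. sqrt (real n) * fact (2*n) / (4^n * fact n * fact n)) \<longlonglongrightarrow> 1 / sqrt pi"
proof -
  have G: "Gamma_series (1/2::real) \<longlonglongrightarrow> sqrt pi"
    using Gamma_series_LIMSEQ[of "1/2::real"] by (simp add: Gamma_one_half_real)
  have R: "(\<lambda>n. real n / (real n + 1/2)) \<longlonglongrightarrow> 1" by real_asymp
  have "(\<lambda>n. real n / (real n + 1/2) / Gamma_series (1/2::real) n) \<longlonglongrightarrow> 1 / sqrt pi"
    using tendsto_divide[OF R G] by simp
  moreover have "eventually (\<lambda>n. real n / (real n + 1/2) / Gamma_series (1/2::real) n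
     = sqrt (real n) * fact (2*n) / (4^n * fact n * fact n)) sequentially"
    using eventually_gt_at_top[of "0::nat"]
  proof eventually_elim
    case (elim n)
    have e: "exp (ln (real n) / 2) = sqrt (real n)"
      using elim by (simp add: sqrt_def root_powr_inverse powr_def)
    have fd: "fact (2*n) = (2 ^ (2 * n) * pochhammer (1 / 2) n * fact n :: real)"
      by (rule fact_double)
    have p: "pochhammer (1/2::real) (n+1) = pochhammer (1/2) n * (1/2 + real n)"
      by (simp add: pochhammer_Suc)
    have pp: "pochhammer (1/2::real) n > 0" by (simp add: pochhammer_pos)
    have s: "sqrt (real n) > 0" using elim by simp
    have ss: "sqrt (real n) * sqrt (real n) = real n" by simp
    have "(4::real)^n = 2^(2*n)" by (simp add: power_mult)
    have G: "Gamma_series (1/2::real) n = fact n * sqrt (real n) / (pochhammer (1/2) n * (real n + 1/2))"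
      unfolding Gamma_series_def p by (simp add: e add.commute)
    have "real n / (real n + 1/2) / Gamma_series (1/2::real) n
        = sqrt (real n) * sqrt (real n) * pochhammer (1/2) n / (fact n * sqrt (real n))"
    proof -
      have a: "real n + 1/2 \<noteq> 0" by simp
      have b: "fact n * sqrt (real n) \<noteq> 0" using s by simp
      have c: "pochhammer (1/2::real) n \<noteq> 0" using pp by simp
      show ?thesis unfolding G using a b c ss by (simp add: divide_simps)
    qed
    also have "\<dots> = sqrt (real n) * pochhammer (1/2) n / fact n"
      using s by (simp add: field_simps)
    also have "\<dots> = sqrt (real n) * fact (2*n) / (4^n * fact n * fact n)"
      unfolding fd \<open>(4::real)^n = 2^(2*n)\<close> by (simp add: field_simps)
    finally show ?case .
  qed
  ultimately show ?thesis by (rule Lim_transform_eventually)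
qed


definition cc :: "nat \<Rightarrow> nat \<Rightarrow> real" where
  "cc n r = sqrt (real n) * fact (2*n) / (4^n * fact (n-r) * fact (n+r))"

lemma ratio: "r \<le> n \<Longrightarrow> fact n * fact n / (fact (n-r) * fact (n+r)) = (\<Prod>k<r. (real n - real k) / (real n + real k + 1))"
proof (induction r)
  case 0 then show ?case by simp
next
  case (Suc r)
  have IH: "fact n * fact n / (fact (n-r) * fact (n+r)) = (\<Prod>k<r. (real n - real k) / (real n + real k + 1))"
    using Suc by simp
  have e1: "n - r = Suc (n - Suc r)" using Suc.prems by simp
  have f1: "(fact (n-r) :: real) = (real n - real r) * fact (n - Suc r)"
    unfolding e1 using Suc.prems by (simp add: of_nat_diff)
  have f2: "(fact (n + Suc r) :: real) = (real n + real r + 1) * fact (n + r)"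
    by simp
  have p1: "(fact (n - Suc r) :: real) > 0" "(fact (n + r) :: real) > 0" by auto
  have p2: "real n - real r > 0" using Suc.prems by simp
  have "fact n * fact n / (fact (n - Suc r) * fact (n + Suc r)) =
        fact n * fact n / (fact (n-r) * fact (n+r)) * ((real n - real r) / (real n + real r + 1))"
  proof -
    have e: "real n + real r + 1 > 0" by simp
    show ?thesis unfolding f1 f2 using p1 p2 e
      by (simp add: divide_simps)
  qed
  then show ?case unfolding IH by simp
qed

lemma cc0: "cc n 0 = sqrt (real n) * fact (2*n) / (4^n * fact n * fact n)"
  by (simp add: cc_def)

lemma cc_lim: "(\<lambda>n. cc n r) \<longlonglongrightarrow> 1 / sqrt pi"
proof -
  have "(\<lambda>n. \<Prod>k<r. (real n - real k) / (real n + real k + 1)) \<longlonglongrightarrow> (\<Prod>k<r. 1)"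
    by (intro tendsto_prod) real_asymp
  then have "(\<lambda>n. cc n 0 * (\<Prod>k<r. (real n - real k) / (real n + real k + 1))) \<longlonglongrightarrow> 1 / sqrt pi * 1"
    unfolding cc0 using central by (intro tendsto_mult) auto
  moreover have "eventually (\<lambda>n. cc n 0 * (\<Prod>k<r. (real n - real k) / (real n + real k + 1)) = cc n r) sequentially"
    using eventually_ge_at_top[of r]
  proof eventually_elim
    case (elim n)
    have "cc n 0 * (\<Prod>k<r. (real n - real k) / (real n + real k + 1))
        = cc n 0 * (fact n * fact n / (fact (n-r) * fact (n+r)))"
      using ratio[OF elim] by simp
    also have "\<dots> = cc n r" unfolding cc_def by (simp add: field_simps)
    finally show ?case .
  qed
  ultimately show ?thesis by (simp add: Lim_transform_eventually)
qed

lemma cc_binom: "r \<le> n \<Longrightarrow> cc n r = sqrt (real n) * real ((2*n) choose (n+r)) / 4^n"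
proof -
  assume "r \<le> n"
  then have "real ((2*n) choose (n+r)) = fact (2*n) / (fact (n+r) * fact (n-r))"
    using binomial_fact[of "n+r" "2*n"] by (simp add: diff_add_eq_diff_diff_swap)
  then show ?thesis unfolding cc_def by (simp add: field_simps)
qed

lemma cc_nonneg: "cc n r \<ge> 0" unfolding cc_def by simp

lemma cc_le: "r \<le> n \<Longrightarrow> cc n r \<le> cc n 0"
proof -
  assume "r \<le> n"
  have "real ((2*n) choose (n+r)) \<le> real ((2*n) choose n)"
    using binomial_maximum'[of n "n+r"] by simp
  then show ?thesis using cc_binom[OF \<open>r \<le> n\<close>] cc_binom[of 0 n]
    by (simp add: divide_right_mono mult_left_mono)
qed


theorem mainTheorem1:
  fixes s :: complex and \<alpha> :: "nat \<Rightarrow> real \<Rightarrow> complex" and chi :: "nat \<Rightarrow> complex"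
    and C \<sigma> :: real
  assumes "Re s > 1"
    and "bounded (range chi)"
    and "C > 0" and "\<sigma> > Re s"
    and lim: "\<And>r. r \<ge> 1 \<Longrightarrow> ((\<lambda>q. \<alpha> r q) \<longlongrightarrow> chi r / of_nat r powr s) (at_left 1)"
    and bnd: "\<And>r q. r \<ge> 1 \<Longrightarrow> 0 < q \<Longrightarrow> q < 1 \<Longrightarrow> norm (\<alpha> r q) \<le> C * real r powr (- \<sigma>)"
  shows "\<exists>f :: nat \<Rightarrow> complex.
           (\<forall>n\<ge>1. ((\<lambda>q. T_n \<alpha> n q) \<longlongrightarrow> f n) (at_left 1)) \<and>
           (f \<longlonglongrightarrow> L_series chi s / complex_of_real (sqrt pi))"
proof -
  define a where "a r = chi r / of_nat r powr s" for r
  define f where "f n = (\<Sum>r=1..n. complex_of_real (cc n r) * a r)" for n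
  have inner: "((\<lambda>q. T_n \<alpha> n q) \<longlongrightarrow> f n) (at_left 1)" if "n \<ge> 1" for n
  proof -
    define K where "K = sqrt (real n) * fact (2*n) / 4^n"
    have ev: "eventually (\<lambda>q. (\<Sum>r=1..n. complex_of_real (K * q^r / (PP q (n-r) * PP q (n+r))) * \<alpha> r q)
                = T_n \<alpha> n q) (at_left 1)"
      using eventually_at_left_real[OF zero_less_one]
    proof eventually_elim
      case (elim q)
      then have q: "0 < q" "q < 1" by auto
      have "T_n \<alpha> n q = (\<Sum>r=1..n. complex_of_real (sqrt (real n) * fact (2*n) * (1 - q) ^ (2*n) / 4 ^ n)
           * (complex_of_real (q ^ r) * \<alpha> r q / complex_of_real (qpoch q (n - r) * qpoch q (n + r))))"
        unfolding T_n_def beta_n_def by (simp add: sum_distrib_left)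
      also have "\<dots> = (\<Sum>r=1..n. complex_of_real (K * q^r / (PP q (n-r) * PP q (n+r))) * \<alpha> r q)"
      proof (intro sum.cong refl)
        fix r assume r: "r \<in> {1..n}"
        have pw: "(1-q)^(2*n) = (1-q)^(n-r) * (1-q)^(n+r)"
          unfolding power_add[symmetric] using r by (intro arg_cong[where f="\<lambda>m. (1-q)^m"]) auto
        have nz: "(1-q)^(n-r) \<noteq> 0" "(1-q)^(n+r) \<noteq> 0" "PP q (n-r) \<noteq> 0" "PP q (n+r) \<noteq> 0"
          using q PP_pos[of q "n-r"] PP_pos[of q "n+r"] by auto
        have re: "sqrt (real n) * fact (2*n) * (1 - q) ^ (2*n) / 4 ^ n * q^r / (qpoch q (n - r) * qpoch q (n + r))
            = K * q^r / (PP q (n-r) * PP q (n+r))"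
          unfolding qpoch_eq pw K_def using nz by (simp add: field_simps)
        have "complex_of_real (sqrt (real n) * fact (2*n) * (1 - q) ^ (2*n) / 4 ^ n)
           * (complex_of_real (q ^ r) * \<alpha> r q / complex_of_real (qpoch q (n - r) * qpoch q (n + r)))
           = complex_of_real (sqrt (real n) * fact (2*n) * (1 - q) ^ (2*n) / 4 ^ n * q^r / (qpoch q (n - r) * qpoch q (n + r))) * \<alpha> r q"
          by (simp add: field_simps)
        then show "complex_of_real (sqrt (real n) * fact (2*n) * (1 - q) ^ (2*n) / 4 ^ n)
           * (complex_of_real (q ^ r) * \<alpha> r q / complex_of_real (qpoch q (n - r) * qpoch q (n + r)))
           = complex_of_real (K * q^r / (PP q (n-r) * PP q (n+r))) * \<alpha> r q"
          unfolding re .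
      qed
      finally show ?case by simp
    qed
    have "((\<lambda>q. \<Sum>r=1..n. complex_of_real (K * q^r / (PP q (n-r) * PP q (n+r))) * \<alpha> r q) \<longlongrightarrow>
           (\<Sum>r=1..n. complex_of_real (K * 1^r / (fact (n-r) * fact (n+r))) * a r)) (at_left 1)"
    proof (intro tendsto_sum tendsto_mult tendsto_of_real tendsto_divide tendsto_power tendsto_const tendsto_ident_at PP_lim)
      fix r assume "r \<in> {1..n}"
      then show "((\<lambda>q. \<alpha> r q) \<longlongrightarrow> a r) (at_left 1)" unfolding a_def by (intro lim) auto
    qed auto
    moreover have "(\<Sum>r=1..n. complex_of_real (K * 1^r / (fact (n-r) * fact (n+r))) * a r) = f n"
      unfolding f_def K_def cc_def by (intro sum.cong refl) (simp add: field_simps)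
    ultimately show ?thesis using ev by (simp add: tendsto_cong)
  qed
  obtain B where B: "B > 0" "\<And>n. norm (cc n 0) \<le> B"
    using convergent_imp_Bseq[OF convergentI[OF cc_lim[of 0]]] by (auto elim: BseqE)
  obtain K where K: "\<And>r. norm (chi r) \<le> K"
    using assms(2) by (auto simp: bounded_iff)
  have na: "norm (a r) \<le> K * real r powr (- Re s)" for r
  proof (cases "r = 0")
    case True then show ?thesis by (simp add: a_def)
  next
    case False
    have "norm (of_nat r powr s :: complex) = real r powr Re s"
      using norm_powr_real_powr[of "of_nat r" s] by simp
    then have "norm (a r) = norm (chi r) / real r powr Re s" by (simp add: a_def norm_divide)
    also have "\<dots> \<le> K / real r powr Re s" using K False by (simp add: divide_right_mono)
    also have "\<dots> = K * real r powr (- Re s)" by (simp add: powr_minus divide_inverse)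
    finally show ?thesis .
  qed
  have sK: "summable (\<lambda>r. K * real r powr (- Re s))"
    using assms(1) by (intro summable_mult) (simp add: summable_real_powr_iff)
  have sa: "summable (\<lambda>r. norm (a r))"
    by (rule summable_comparison_test'[OF sK]) (use na in auto)
  define g where "g k n = (if k \<in> {1..n} then complex_of_real (cc n k) * a k else 0)" for k n
  define b where "b k = (if k \<ge> 1 then complex_of_real (1 / sqrt pi) * a k else 0)" for k
  have glim: "(\<lambda>n. g k n) \<longlonglongrightarrow> b k" for k
  proof (cases "k \<ge> 1")
    case True
    have "(\<lambda>n. complex_of_real (cc n k) * a k) \<longlonglongrightarrow> b k"
      using True tendsto_mult_right[OF tendsto_of_real[OF cc_lim[of k]], of "a k"]
      by (simp add: b_def)
    moreover have "eventually (\<lambda>n. complex_of_real (cc n k) * a k = g k n) sequentially"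
      using eventually_ge_at_top[of k] by eventually_elim (use True in \<open>auto simp: g_def\<close>)
    ultimately show ?thesis by (rule Lim_transform_eventually)
  next
    case False then show ?thesis by (simp add: g_def b_def)
  qed
  have gb: "norm (g k n) \<le> B * norm (a k)" for k n
  proof (cases "k \<in> {1..n}")
    case True
    have "cc n k \<le> B" using cc_le[of k n] B(2)[of n] True cc_nonneg[of n 0] by auto
    then show ?thesis using True cc_nonneg[of n k] by (simp add: g_def norm_mult mult_right_mono)
  next
    case False then show ?thesis using B by (simp only: g_def if_False) simp
  qed
  have T: "((\<lambda>n. suminf (\<lambda>k. g k n)) \<longlonglongrightarrow> suminf b) \<and> summable (\<lambda>n. norm (b n))"
    using tannerys_theorem[of g b sequentially "\<lambda>k. B * norm (a k)", OF glim _ summable_mult[OF sa]]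
    by (auto intro!: always_eventually simp: gb)
  have sf: "suminf (\<lambda>k. g k n) = f n" for n
    unfolding f_def by (subst suminf_finite[of "{1..n}"]) (auto simp: g_def)
  have sb: "summable b" using T by (auto intro: summable_norm_cancel)
  have "suminf b = (\<Sum>r. b (Suc r))" using suminf_split_head[OF sb] by (simp add: b_def)
  also have "\<dots> = (\<Sum>r. complex_of_real (1 / sqrt pi) * a (Suc r))" by (simp add: b_def)
  also have "\<dots> = complex_of_real (1 / sqrt pi) * (\<Sum>r. a (Suc r))"
    by (rule suminf_mult) (use sa summable_Suc_iff summable_norm_cancel in blast)
  also have "\<dots> = L_series chi s / complex_of_real (sqrt pi)"
    by (simp add: L_series_def a_def field_simps)
  finally have "f \<longlonglongrightarrow> L_series chi s / complex_of_real (sqrt pi)"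
    using T sf by simp
  then show ?thesis using inner by blast
qed

end
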